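(* Let $\theta$ be a random variable with a continuous distribution, let $u(q,\theta)$ be a utility function, monotone increasing in $q$, with $\partial^2u(q,\theta)/\partial q^2=-1/d$ for all $(q,\theta)$, where $d>0$. Let $\lambda>0$, $\epsilon>0$ and let the penalty with deadband be $$\phi(x)=\begin{cases}\dfrac{(|x|-\epsilon)^2}{2\lambda}, & |x|\ge\epsilon,\\ 0, & \text{otherwise.}\end{cases}$$ Let $\pi_0>0$, $\pi_2>0$, $p\in(0,1)$. Define $q^a(\theta)=\arg\min_q\{\pi_0 q-u(q,\theta)\}$, $q^b(f,\theta)=\arg\min_q\{\pi_0 q-u(q,\theta)+\phi(f-q)\}$, $q^c(\theta)=\arg\min_q\{\pi_0 q-u(q,\theta)-\pi_2(f-q)\}$, $$H(f)=p\,\mathbb{E}_\theta[\pi_0 q^c-u(q^c,\theta)-\pi_2(f-q^c)]+(1-p)\,\mathbb{E}_\theta[\pi_0 q^b-u(q^b,\theta)+\phi(f-q^b)],$$ and let $f^*$ be the optimal baseline report (minimizer of $H$). Suppose $q^a(\theta)\in[q_{\min},q_{\max}]$ for all $\theta$ and $\max\{q_{\max}-\mathbb{E}_\theta q^a(\theta),\ \mathbb{E}_\theta q^a(\theta)-q_{\min}\}\le\epsilon$. Then the expected inflation of the baseline report satisfies $$\mathbb{E}_\theta\,\delta f^*(p)=f^*-\mathbb{E}_\theta q^a(\theta)\le(d+\lambda)\frac{p\,\pi_2}{1-p}+\epsilon,$$ and the mechanism is individually rational.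
   Context: A consumer in a demand response program self-reports baseline $f$; with probability $p$ it is called and paid $\pi_2$ per unit of reduction $f-q$, otherwise it pays the penalty $\phi(f-q)$. $\pi_0$ is the retail price and $q^a(\theta)$ is the consumption when not participating (true baseline). Individual rationality means that the consumer's minimal expected cost when participating with its optimal report, $H(f^* )$, is no larger than its expected cost when not participating, $\mathbb{E}_\theta[\pi_0 q^a(\theta)-u(q^a(\theta),\theta)]$. *)

theory Defs
  imports "HOL-Probability.Probability"
begin

text \<open>A minimizer of a real function (chosen by Hilbert choice; the minimizers
  relevant here are unique by strict convexity).\<close>
definition argmin :: "(real \<Rightarrow> real) \<Rightarrow> real" where
  "argmin g = (SOME q. \<forall>q'. g q \<le> g q')"

definition penalty :: "real \<Rightarrow> real \<Rightarrow> real \<Rightarrow> real" where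
  "penalty lam eps x = (if \<bar>x\<bar> \<ge> eps then (\<bar>x\<bar> - eps)^2 / (2 * lam) else 0)"

text \<open>Consumption when not participating (true baseline).\<close>
definition qa :: "real \<Rightarrow> (real \<Rightarrow> 'a \<Rightarrow> real) \<Rightarrow> 'a \<Rightarrow> real" where
  "qa pi0 u \<theta> = argmin (\<lambda>q. pi0 * q - u q \<theta>)"

text \<open>Consumption when not called (pays penalty on deviation from report f).\<close>
definition qb :: "real \<Rightarrow> (real \<Rightarrow> 'a \<Rightarrow> real) \<Rightarrow> (real \<Rightarrow> real) \<Rightarrow> real \<Rightarrow> 'a \<Rightarrow> real" where
  "qb pi0 u phi f \<theta> = argmin (\<lambda>q. pi0 * q - u q \<theta> + phi (f - q))"

text \<open>Consumption when called (paid pi2 per unit of reduction f - q).\<close>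
definition qc :: "real \<Rightarrow> real \<Rightarrow> (real \<Rightarrow> 'a \<Rightarrow> real) \<Rightarrow> real \<Rightarrow> 'a \<Rightarrow> real" where
  "qc pi0 pi2 u f \<theta> = argmin (\<lambda>q. pi0 * q - u q \<theta> - pi2 * (f - q))"

definition Hcost :: "'a measure \<Rightarrow> real \<Rightarrow> real \<Rightarrow> real \<Rightarrow> (real \<Rightarrow> 'a \<Rightarrow> real)
    \<Rightarrow> (real \<Rightarrow> real) \<Rightarrow> real \<Rightarrow> real" where
  "Hcost M p pi0 pi2 u phi f =
     p * (\<integral>\<theta>. (let q = qc pi0 pi2 u f \<theta> in pi0 * q - u q \<theta> - pi2 * (f - q)) \<partial>M)
     + (1 - p) * (\<integral>\<theta>. (let q = qb pi0 u phi f \<theta> in pi0 * q - u q \<theta> + phi (f - q)) \<partial>M)"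

end

theory Submission
  imports Defs
begin


lemma argmin_val:
  assumes "\<forall>q'. g q0 \<le> g q'"
  shows "g (argmin g) = g q0"
proof -
  have "\<forall>q'. g (argmin g) \<le> g q'" unfolding argmin_def by (rule someI[of _ q0]) (use assms in auto)
  then show ?thesis using assms by (meson antisym)
qed

lemma argmin_unique:
  fixes d K q0 :: real
  assumes "\<forall>q. g q = K + (q - q0)^2/(2*d)" "d > 0"
  shows "argmin g = q0"
proof -
  have "\<forall>q'. g q0 \<le> g q'" using assms by (simp add: divide_nonneg_pos)
  from argmin_val[OF this] have "g (argmin g) = g q0" .
  then have "(argmin g - q0)^2/(2*d) = 0" using assms(1) by simp
  then show ?thesis using assms(2) by simp
qed

lemma quad_form:
  fixes U U' :: "real \<Rightarrow> real" and d :: real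
  assumes D1: "\<forall>q. (U has_real_derivative U' q) (at q)"
    and D2: "\<forall>q. (U' has_real_derivative (-1/d)) (at q)" and dpos: "d > 0"
  shows "U q = U 0 + (U 1 - U 0 + 1/(2*d)) * q - q^2/(2*d)"
proof -
  define c where "c = U' 0"
  have h: "U' x + x/d = c" for x
  proof -
    have "\<forall>x. ((\<lambda>x. U' x + x/d) has_real_derivative 0) (at x)"
    proof
      fix x
      have "((\<lambda>x. U' x + x/d) has_real_derivative (-1/d + 1/d)) (at x)"
        using D2 dpos by (auto intro!: derivative_eq_intros)
      then show "((\<lambda>x. U' x + x/d) has_real_derivative 0) (at x)" by simp
    qed
    from DERIV_isconst_all[OF this, of x 0] show ?thesis by (simp add: c_def)
  qed
  have D0: "\<forall>x. ((\<lambda>x. U x + x^2/(2*d) - c*x) has_real_derivative 0) (at x)"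
  proof
    fix x
    have "((\<lambda>x. U x + x^2/(2*d) - c*x) has_real_derivative (U' x + (2 * x)/(2*d) - c)) (at x)"
      using D1 dpos by (auto intro!: derivative_eq_intros)
    moreover have "U' x + (2 * x)/(2*d) - c = 0" using h[of x] dpos by simp
    ultimately show "((\<lambda>x. U x + x^2/(2*d) - c*x) has_real_derivative 0) (at x)" by simp
  qed
  have e: "U x + x^2/(2*d) - c*x = U 0" for x
    using DERIV_isconst_all[OF D0, of x 0] by simp
  have "c = U 1 - U 0 + 1/(2*d)" using e[of 1] by simp
  moreover have "U q = U 0 + c*q - q^2/(2*d)" using e[of q] by simp
  ultimately show ?thesis by simp
qed

lemma pen_nonneg: "lam > 0 \<Longrightarrow> penalty lam eps x \<ge> 0"
  unfolding penalty_def by auto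

lemma pen_even: "penalty lam eps (-x) = penalty lam eps x"
  unfolding penalty_def by auto

lemma pen_val_pos: "D > 0 \<Longrightarrow> z \<ge> eps \<Longrightarrow> eps > 0 \<Longrightarrow> D * penalty D eps z = (z-eps)^2/2"
  unfolding penalty_def by auto

lemma pen_val_neg: "D > 0 \<Longrightarrow> z \<le> -eps \<Longrightarrow> eps > 0 \<Longrightarrow> D * penalty D eps z = (z+eps)^2/2"
proof -
  assume a: "D > 0" "z \<le> -eps" "eps > 0"
  have "D * penalty D eps (-z) = (-z-eps)^2/2" using a by (intro pen_val_pos) auto
  moreover have "(-z-eps)^2 = (z+eps)^2" by (simp add: power2_eq_square algebra_simps)
  ultimately show ?thesis using pen_even[of D eps z] by simp
qed

lemma pen_val_mid: "\<bar>z\<bar> < eps \<Longrightarrow> penalty D eps z = 0"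
  unfolding penalty_def by auto

lemma cs_ineq:
  fixes a b d lam :: real
  assumes "d > 0" "lam > 0"
  shows "(a+b)^2/(2*(d+lam)) \<le> a^2/(2*d) + b^2/(2*lam)"
proof -
  have "(a^2/d + b^2/lam)*(d+lam) - (a+b)^2 = (lam*a - d*b)^2/(d*lam)"
    using assms by (simp add: field_simps power2_eq_square)
  also have "\<dots> \<ge> 0" using assms by simp
  finally have "(a+b)^2 \<le> (a^2/d + b^2/lam)*(d+lam)" by simp
  then have "(a+b)^2/(d+lam) \<le> a^2/d + b^2/lam" using assms by (simp add: divide_le_eq)
  moreover have "(a+b)^2/(2*(d+lam)) = ((a+b)^2/(d+lam))/2" by simp
  moreover have "a^2/(2*d) + b^2/(2*lam) = (a^2/d + b^2/lam)/2" by simp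
  ultimately show ?thesis by (metis divide_right_mono zero_le_numeral)
qed

lemma infconv_lower_pos:
  fixes d lam eps x y :: real
  assumes "d > 0" "lam > 0" "eps > 0" "x \<ge> 0"
  shows "penalty (d+lam) eps x \<le> y^2/(2*d) + penalty lam eps (x - y)"
proof (cases "x \<ge> eps")
  case False
  then show ?thesis using assms pen_nonneg[of lam eps "x-y"] unfolding penalty_def by auto
next
  case True
  have L: "penalty (d+lam) eps x = (x-eps)^2/(2*(d+lam))" using True assms unfolding penalty_def by auto
  show ?thesis
  proof (cases "x - y \<ge> eps")
    case True
    have "penalty lam eps (x-y) = (x-y-eps)^2/(2*lam)" using True assms unfolding penalty_def by auto
    moreover have "(y + (x-y-eps))^2/(2*(d+lam)) \<le> y^2/(2*d) + (x-y-eps)^2/(2*lam)"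
      by (rule cs_ineq) (use assms in auto)
    ultimately show ?thesis using L by simp
  next
    case False
    then have "0 \<le> x - eps" "x - eps \<le> y" using True by auto
    then have "(x-eps)^2 \<le> y^2" by (simp add: power_mono)
    moreover have "(x-eps)^2/(2*(d+lam)) \<le> (x-eps)^2/(2*d)"
      using assms by (intro divide_left_mono) auto
    ultimately have "(x-eps)^2/(2*(d+lam)) \<le> y^2/(2*d)"
      using assms by (smt (verit) divide_right_mono)
    then show ?thesis using L pen_nonneg[of lam eps "x-y"] assms by linarith
  qed
qed

lemma infconv_lower:
  fixes d lam eps x y :: real
  assumes "d > 0" "lam > 0" "eps > 0"
  shows "penalty (d+lam) eps x \<le> y^2/(2*d) + penalty lam eps (x - y)"
proof (cases "x \<ge> 0")
  case True
  then show ?thesis using infconv_lower_pos assms by blast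
next
  case False
  have "penalty (d+lam) eps (-x) \<le> (-y)^2/(2*d) + penalty lam eps (-x - (-y))"
    using False assms by (intro infconv_lower_pos) auto
  then show ?thesis using pen_even[of "d+lam" eps x] pen_even[of lam eps "x-y"] by simp
qed

lemma alg1:
  fixes d lam t :: real
  assumes "d > 0" "lam > 0"
  shows "(d*t/(d+lam))^2/(2*d) + (lam*t/(d+lam))^2/(2*lam) = t^2/(2*(d+lam))"
proof -
  have D: "d + lam \<noteq> 0" using assms by simp
  have "(d*t/(d+lam))^2/(2*d) = d*t^2/(2*(d+lam)^2)" using assms D
    by (simp add: power_divide power_mult_distrib power2_eq_square) (simp add: algebra_simps)
  moreover have "(lam*t/(d+lam))^2/(2*lam) = lam*t^2/(2*(d+lam)^2)" using assms D
    by (simp add: power_divide power_mult_distrib power2_eq_square) (simp add: algebra_simps)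
  moreover have "d*t^2/(2*(d+lam)^2) + lam*t^2/(2*(d+lam)^2) = t^2/(2*(d+lam))"
    using assms D by (simp add: power2_eq_square add_divide_distrib[symmetric] distrib_right[symmetric])
  ultimately show ?thesis by simp
qed
lemma s1: fixes x y eps :: real shows "(x - y) * (y - eps) \<le> (x-eps)^2/2 - (y-eps)^2/2"
proof -
  have "(x-eps)^2/2 - (y-eps)^2/2 - (x-y)*(y-eps) = (x-y)^2/2" by (simp add: power2_eq_square field_simps)
  moreover have "0 \<le> (x-y)^2/2" by simp
  ultimately show ?thesis by linarith
qed
lemma s2: fixes x y eps :: real shows "(x-y)*(y+eps) \<le> (x+eps)^2/2 - (y+eps)^2/2"
proof -
  have "(x+eps)^2/2 - (y+eps)^2/2 - (x-y)*(y+eps) = (x-y)^2/2" by (simp add: power2_eq_square field_simps)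
  moreover have "0 \<le> (x-y)^2/2" by simp
  ultimately show ?thesis by linarith
qed

lemma infconv_attained:
  fixes d lam eps x :: real
  assumes "d > 0" "lam > 0" "eps > 0"
  shows "\<exists>y. y^2/(2*d) + penalty lam eps (x - y) = penalty (d+lam) eps x"
proof -
  consider "x \<ge> eps" | "x \<le> -eps" | "\<bar>x\<bar> < eps" by linarith
  then show ?thesis
  proof cases
    case 1
    define y where "y = d*(x-eps)/(d+lam)"
    have "x - y - eps = lam*(x-eps)/(d+lam)" using assms unfolding y_def by (simp add: field_simps)
    moreover have "x - y - eps \<ge> 0" using 1 assms calculation by simp
    then have "penalty lam eps (x-y) = (x-y-eps)^2/(2*lam)" using assms unfolding penalty_def by auto
    ultimately have P: "penalty lam eps (x-y) = (lam*(x-eps)/(d+lam))^2/(2*lam)"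
      by simp
    have "y^2/(2*d) + (lam*(x-eps)/(d+lam))^2/(2*lam) = (x-eps)^2/(2*(d+lam))"
      using assms(1,2) unfolding y_def by (rule alg1)
    then show ?thesis using P 1 assms unfolding penalty_def by (intro exI[of _ y]) auto
  next
    case 2
    define y where "y = d*(x+eps)/(d+lam)"
    have e1: "x - y + eps = lam*(x+eps)/(d+lam)" using assms unfolding y_def by (simp add: field_simps)
    have "x - y + eps \<le> 0" using 2 assms e1
      by (simp add: divide_nonpos_pos mult_nonneg_nonpos)
    then have "lam * penalty lam eps (x-y) = (x-y+eps)^2/2" using assms
      by (intro pen_val_neg) auto
    then have "penalty lam eps (x-y) = (x-y+eps)^2/(2*lam)" using assms by (simp add: field_simps)
    then have P: "penalty lam eps (x-y) = (lam*(x+eps)/(d+lam))^2/(2*lam)" using e1 by simp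
    have "y^2/(2*d) + (lam*(x+eps)/(d+lam))^2/(2*lam) = (x+eps)^2/(2*(d+lam))"
      using assms(1,2) unfolding y_def by (rule alg1)
    moreover have "(d+lam) * penalty (d+lam) eps x = (x+eps)^2/2" using assms 2
      by (intro pen_val_neg) auto
    then have "penalty (d+lam) eps x = (x+eps)^2/(2*(d+lam))" using assms by (simp add: field_simps)
    ultimately show ?thesis using P by (intro exI[of _ y]) auto
  next
    case 3
    then show ?thesis unfolding penalty_def by (intro exI[of _ 0]) auto
  qed
qed

lemma pen_subgrad:
  fixes D eps x y :: real
  assumes "D > 0" "eps > 0" "y \<le> x"
  shows "penalty D eps x - penalty D eps y \<ge> (x - y) * (y - eps) / D"
proof -
  have pxn: "D * penalty D eps x \<ge> 0" using pen_nonneg[of D eps x] assms by simp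
  have Dx1: "x \<ge> eps \<Longrightarrow> D * penalty D eps x = (x-eps)^2/2" using assms pen_val_pos by blast
  have Dx2: "x \<le> -eps \<Longrightarrow> D * penalty D eps x = (x+eps)^2/2" using assms pen_val_neg by blast
  have Dx3: "y \<ge> eps \<Longrightarrow> D * penalty D eps y = (y-eps)^2/2" using assms pen_val_pos by blast
  have Dx4: "y \<le> -eps \<Longrightarrow> D * penalty D eps y = (y+eps)^2/2" using assms pen_val_neg by blast
  have Dx5: "\<bar>y\<bar> < eps \<Longrightarrow> D * penalty D eps y = 0" using pen_val_mid by simp
  note Dx = Dx1 Dx2 Dx3 Dx4 Dx5
  have "(x - y) * (y - eps) \<le> D * penalty D eps x - D * penalty D eps y"
  proof -
    consider "y \<ge> eps" | "\<bar>y\<bar> < eps" | "y \<le> -eps" by linarith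
    then show ?thesis
    proof cases
      case 1
      then have "x \<ge> eps" using assms by simp
      then show ?thesis using Dx(1) Dx(3)[OF 1] s1[of x y eps] by linarith
    next
      case 2
      have "(x - y) * (y - eps) \<le> 0" using 2 assms by (simp add: mult_nonneg_nonpos)
      then show ?thesis using Dx(5)[OF 2] pxn by linarith
    next
      case 3
      have a: "(x - y) * (y - eps) \<le> (x - y) * (y + eps)" using assms by (simp add: mult_left_mono)
      show ?thesis
      proof (cases "x \<le> -eps")
        case True
        have "(x-y)*(y+eps) \<le> (x+eps)^2/2 - (y+eps)^2/2" by (rule s2)
        then show ?thesis using a Dx(2)[OF True] Dx(4)[OF 3] by linarith
      next
        case False
        have "(y+eps)^2/2 + (x-y)*(y+eps) \<le> 0"
        proof -
          have "(x-y)*(y+eps) \<le> (-(y+eps))*(y+eps)"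
            using False 3 by (intro mult_right_mono_neg) auto
          moreover have "(y+eps)^2 = (y+eps)*(y+eps)" by (simp add: power2_eq_square)
          moreover have "0 \<le> (y+eps)*(y+eps)" by simp
          ultimately show ?thesis by linarith
        qed
        then show ?thesis using a Dx(4)[OF 3] pxn by linarith
      qed
    qed
  qed
  then show ?thesis using assms by (simp add: divide_le_eq mult.commute right_diff_distrib)
qed


lemma sq_bound:
  fixes a b x :: real
  assumes "a \<le> x" "x \<le> b"
  shows "x^2 \<le> a^2 + b^2"
proof (cases "x \<ge> 0")
  case True
  then have "x^2 \<le> b^2" using assms by (intro power_mono) auto
  moreover have "0 \<le> a^2" by simp
  ultimately show ?thesis by linarith
next
  case False
  then have "(-x)^2 \<le> (-a)^2" using assms by (intro power_mono) auto
  moreover have "(-x)^2 = x^2" "(-a)^2 = a^2" by simp_all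
  moreover have "0 \<le> b^2" by simp
  ultimately show ?thesis by linarith
qed

lemma pen_le_sq:
  fixes D eps z :: real
  assumes "D > 0" "eps > 0"
  shows "penalty D eps z \<le> z^2/(2*D)"
proof (cases "\<bar>z\<bar> \<ge> eps")
  case True
  then have "(\<bar>z\<bar> - eps)^2 \<le> \<bar>z\<bar>^2" using assms by (intro power_mono) auto
  then have "(\<bar>z\<bar> - eps)^2/(2*D) \<le> z^2/(2*D)" using assms by (intro divide_right_mono) auto
  then show ?thesis using True unfolding penalty_def by simp
next
  case False
  then show ?thesis using assms unfolding penalty_def by simp
qed

lemma pen_zero: "\<bar>z\<bar> \<le> eps \<Longrightarrow> penalty D eps z = 0"
  unfolding penalty_def by auto

theorem theorem4:
  fixes M :: "real measure" and u u' :: "real \<Rightarrow> real \<Rightarrow> real"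
    and d lam eps pi0 pi2 p q_min q_max fstar :: real
  assumes prob: "prob_space M" and sets_M: "sets M = sets borel"
    and cont: "\<forall>t. measure M {t} = 0"
    and u_int: "\<forall>q. integrable M (\<lambda>\<theta>. u q \<theta>)"
    and u_deriv: "\<forall>\<theta> q. ((\<lambda>q. u q \<theta>) has_real_derivative u' q \<theta>) (at q)"
    and u_deriv2: "\<forall>\<theta> q. ((\<lambda>q. u' q \<theta>) has_real_derivative (- 1 / d)) (at q)"
    and u_mono: "\<forall>\<theta>. mono_on {q_min..q_max} (\<lambda>q. u q \<theta>)"
    and d_pos: "d > 0" and lam_pos: "lam > 0" and eps_pos: "eps > 0"
    and pi0_pos: "pi0 > 0" and pi2_pos: "pi2 > 0" and p_pos: "0 < p" and p_lt1: "p < 1"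
    and qa_range: "\<forall>\<theta>\<in>space M. qa pi0 u \<theta> \<in> {q_min..q_max}"
    and spread: "max (q_max - (\<integral>\<theta>. qa pi0 u \<theta> \<partial>M)) ((\<integral>\<theta>. qa pi0 u \<theta> \<partial>M) - q_min) \<le> eps"
    and fstar_opt: "\<forall>f. Hcost M p pi0 pi2 u (penalty lam eps) fstar
                        \<le> Hcost M p pi0 pi2 u (penalty lam eps) f"
  shows "(\<integral>\<theta>. fstar - qa pi0 u \<theta> \<partial>M) = fstar - (\<integral>\<theta>. qa pi0 u \<theta> \<partial>M)
     \<and> fstar - (\<integral>\<theta>. qa pi0 u \<theta> \<partial>M) \<le> (d + lam) * (p * pi2 / (1 - p)) + eps
     \<and> Hcost M p pi0 pi2 u (penalty lam eps) fstar
         \<le> (\<integral>\<theta>. pi0 * qa pi0 u \<theta> - u (qa pi0 u \<theta>) \<theta> \<partial>M)"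
proof -
  interpret P: prob_space M by (rule prob)
  have spM: "space M = UNIV" using sets_eq_imp_space_eq[OF sets_M] by simp
  define B where "B \<theta> = u 1 \<theta> - u 0 \<theta> + 1/(2*d)" for \<theta>
  have u1m: "(\<lambda>\<theta>. u 1 \<theta>) \<in> borel_measurable M" and u0m: "(\<lambda>\<theta>. u 0 \<theta>) \<in> borel_measurable M"
    using u_int by auto
  note [measurable] = u1m u0m
  have Bm[measurable]: "B \<in> borel_measurable M" unfolding B_def by measurable
  have quad: "u q \<theta> = u 0 \<theta> + B \<theta> * q - q^2/(2*d)" for q \<theta>
    unfolding B_def
    by (rule quad_form[where U'="\<lambda>q. u' q \<theta>"]) (use u_deriv u_deriv2 d_pos in auto)
  define Q where "Q \<theta> = d*(B \<theta> - pi0)" for \<theta>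
  define K where "K \<theta> = - u 0 \<theta> - (Q \<theta>)^2/(2*d)" for \<theta>
  have Qm[measurable]: "Q \<in> borel_measurable M" unfolding Q_def by measurable
  have Km[measurable]: "K \<in> borel_measurable M" unfolding K_def by measurable
  have key: "pi0*q - u q \<theta> = K \<theta> + (q - Q \<theta>)^2/(2*d)" for q \<theta>
  proof -
    have "pi0*q - u q \<theta> = pi0*q - (u 0 \<theta> + B \<theta> * q - q^2/(2*d))" using quad[of q \<theta>] by simp
    also have "\<dots> = K \<theta> + (q - Q \<theta>)^2/(2*d)"
      unfolding K_def Q_def using d_pos by (simp add: power2_eq_square field_simps)
    finally show ?thesis .
  qed
  have qa_eq: "qa pi0 u \<theta> = Q \<theta>" for \<theta>
    unfolding qa_def by (rule argmin_unique[where K="K \<theta>" and d=d]) (use key d_pos in auto)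
  have qa_fun: "qa pi0 u = Q" using qa_eq by auto
  have K_eq: "pi0 * qa pi0 u \<theta> - u (qa pi0 u \<theta>) \<theta> = K \<theta>" for \<theta>
    using key[of "Q \<theta>" \<theta>] qa_eq by simp
  have Qr: "q_min \<le> Q \<theta>" "Q \<theta> \<le> q_max" for \<theta> using qa_range spM qa_eq by auto
  have Q_int: "integrable M Q"
  proof (rule P.integrable_const_bound[where B="\<bar>q_min\<bar> + \<bar>q_max\<bar>"])
    show "AE x in M. norm (Q x) \<le> \<bar>q_min\<bar> + \<bar>q_max\<bar>"
    proof (rule AE_I2)
      fix x
      show "norm (Q x) \<le> \<bar>q_min\<bar> + \<bar>q_max\<bar>" using Qr(1)[of x] Qr(2)[of x] by (simp add: abs_if)
    qed
  qed simp
  have Qsq_int: "integrable M (\<lambda>\<theta>. (Q \<theta>)^2/(2*d))"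
  proof (rule P.integrable_const_bound[where B="(q_min^2 + q_max^2)/(2*d)"])
    show "AE x in M. norm ((Q x)^2/(2*d)) \<le> (q_min^2 + q_max^2)/(2*d)"
      using sq_bound[OF Qr] d_pos by (auto intro!: divide_right_mono)
  qed simp
  have K_int: "integrable M K"
    unfolding K_def using u_int Qsq_int by auto
  have m_int: "integrable M (\<lambda>\<theta>. penalty (d+lam) eps (f - Q \<theta>))" for f
  proof (rule P.integrable_const_bound[where B="((f-q_max)^2 + (f-q_min)^2)/(2*(d+lam))"])
    show "AE x in M. norm (penalty (d+lam) eps (f - Q x)) \<le> ((f-q_max)^2 + (f-q_min)^2)/(2*(d+lam))"
    proof (rule AE_I2)
      fix x
      have "(f - Q x)^2 \<le> (f-q_max)^2 + (f-q_min)^2" using Qr[of x] by (intro sq_bound) auto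
      then have "(f - Q x)^2/(2*(d+lam)) \<le> ((f-q_max)^2 + (f-q_min)^2)/(2*(d+lam))"
        using d_pos lam_pos by (intro divide_right_mono) auto
      moreover have "penalty (d+lam) eps (f - Q x) \<le> (f - Q x)^2/(2*(d+lam))"
        using d_pos lam_pos eps_pos by (intro pen_le_sq) auto
      moreover have "penalty (d+lam) eps (f - Q x) \<ge> 0" using d_pos lam_pos pen_nonneg by auto
      ultimately show "norm (penalty (d+lam) eps (f - Q x)) \<le> ((f-q_max)^2 + (f-q_min)^2)/(2*(d+lam))"
        by simp
    qed
    show "(\<lambda>\<theta>. penalty (d+lam) eps (f - Q \<theta>)) \<in> borel_measurable M"
      unfolding penalty_def by measurable
  qed
  have qc_val: "(let q = qc pi0 pi2 u f \<theta> in pi0*q - u q \<theta> - pi2*(f-q)) = K \<theta> - pi2*(f - Q \<theta>) - d*pi2^2/2"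
    for f \<theta>
  proof -
    define g where "g q = pi0*q - u q \<theta> - pi2*(f-q)" for q
    have gq: "g q = K \<theta> - pi2*(f - Q \<theta>) - d*pi2^2/2 + (q - (Q \<theta> - d*pi2))^2/(2*d)" for q
    proof -
      have "g q = K \<theta> + (q - Q \<theta>)^2/(2*d) - pi2*(f-q)" unfolding g_def using key[of q \<theta>] by simp
      also have "\<dots> = K \<theta> - pi2*(f - Q \<theta>) - d*pi2^2/2 + (q - (Q \<theta> - d*pi2))^2/(2*d)"
        using d_pos by (simp add: power2_eq_square field_simps)
      finally show ?thesis .
    qed
    have "\<forall>q'. g (Q \<theta> - d*pi2) \<le> g q'" using gq d_pos by simp
    from argmin_val[OF this] have "g (argmin g) = g (Q \<theta> - d*pi2)" .
    also have "\<dots> = K \<theta> - pi2*(f - Q \<theta>) - d*pi2^2/2" using gq[of "Q \<theta> - d*pi2"] by simp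
    finally have "g (argmin g) = K \<theta> - pi2*(f - Q \<theta>) - d*pi2^2/2" .
    then show ?thesis unfolding qc_def g_def Let_def by simp
  qed
  have qb_val: "(let q = qb pi0 u (penalty lam eps) f \<theta> in pi0*q - u q \<theta> + penalty lam eps (f-q))
      = K \<theta> + penalty (d+lam) eps (f - Q \<theta>)" for f \<theta>
  proof -
    define g where "g q = pi0*q - u q \<theta> + penalty lam eps (f-q)" for q
    have gq: "g q = K \<theta> + ((q - Q \<theta>)^2/(2*d) + penalty lam eps ((f - Q \<theta>) - (q - Q \<theta>)))" for q
      unfolding g_def using key[of q \<theta>] by simp
    obtain y where y: "y^2/(2*d) + penalty lam eps ((f - Q \<theta>) - y) = penalty (d+lam) eps (f - Q \<theta>)"
      using infconv_attained d_pos lam_pos eps_pos by blast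
    have "g (Q \<theta> + y) = K \<theta> + ((Q \<theta> + y - Q \<theta>)^2/(2*d) + penalty lam eps ((f - Q \<theta>) - (Q \<theta> + y - Q \<theta>)))"
      by (rule gq)
    then have "g (Q \<theta> + y) = K \<theta> + (y^2/(2*d) + penalty lam eps ((f - Q \<theta>) - y))"
      by (simp only: add_diff_cancel_left')
    then have g0: "g (Q \<theta> + y) = K \<theta> + penalty (d+lam) eps (f - Q \<theta>)" by (simp only: y)
    have "\<forall>q'. g (Q \<theta> + y) \<le> g q'"
    proof
      fix q'
      have "penalty (d+lam) eps (f - Q \<theta>) \<le> (q' - Q \<theta>)^2/(2*d) + penalty lam eps ((f - Q \<theta>) - (q' - Q \<theta>))"
        by (rule infconv_lower) (use d_pos lam_pos eps_pos in auto)
      then show "g (Q \<theta> + y) \<le> g q'" unfolding g0 using gq[of q'] by simp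
    qed
    from argmin_val[OF this] have "g (argmin g) = K \<theta> + penalty (d+lam) eps (f - Q \<theta>)"
      using g0 by simp
    then show ?thesis unfolding qb_def g_def Let_def by simp
  qed
  define EK where "EK = (\<integral>\<theta>. K \<theta> \<partial>M)"
  define EQ where "EQ = (\<integral>\<theta>. Q \<theta> \<partial>M)"
  define Em where "Em f = (\<integral>\<theta>. penalty (d+lam) eps (f - Q \<theta>) \<partial>M)" for f
  have HF: "Hcost M p pi0 pi2 u (penalty lam eps) f = EK - p*pi2*(f - EQ) - p*(d*pi2^2/2) + (1-p)*Em f" for f
  proof -
    have i1: "(\<integral>\<theta>. K \<theta> - pi2*(f - Q \<theta>) - d*pi2^2/2 \<partial>M) = EK - pi2*(f - EQ) - d*pi2^2/2"
      unfolding EK_def EQ_def using K_int Q_int by (simp add: algebra_simps P.prob_space)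
    have i2: "(\<integral>\<theta>. K \<theta> + penalty (d+lam) eps (f - Q \<theta>) \<partial>M) = EK + Em f"
      unfolding EK_def Em_def using K_int m_int by simp
    show ?thesis unfolding Hcost_def qc_val qb_val i1 i2 by (simp add: algebra_simps)
  qed
  have c1: "(\<integral>\<theta>. fstar - qa pi0 u \<theta> \<partial>M) = fstar - (\<integral>\<theta>. qa pi0 u \<theta> \<partial>M)"
    unfolding qa_fun using Q_int by (simp add: P.prob_space)
  have c2: "fstar - EQ \<le> (d + lam) * (p * pi2 / (1 - p)) + eps"
  proof (rule ccontr)
    assume neg: "\<not> fstar - EQ \<le> (d + lam) * (p * pi2 / (1 - p)) + eps"
    define f0 where "f0 = EQ + (d + lam) * (p * pi2 / (1 - p)) + eps"
    have gt: "fstar > f0" using neg unfolding f0_def by simp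
    define f1 where "f1 = (fstar + f0)/2"
    define \<delta> where "\<delta> = fstar - f1"
    define g where "g = (f1 - EQ - eps)/(d+lam)"
    have dpos: "\<delta> > 0" unfolding \<delta>_def f1_def using gt by simp
    have "f1 > f0" unfolding f1_def using gt by simp
    then have "f1 - EQ - eps > (d + lam) * (p * pi2 / (1 - p))" using f0_def by linarith
    then have "g > p * pi2 / (1 - p)" unfolding g_def using d_pos lam_pos
      by (simp add: pos_less_divide_eq mult.commute)
    then have "(1-p)*g > (1-p)*(p * pi2 / (1 - p))" using p_lt1 by (intro mult_strict_left_mono) auto
    then have "(1-p)*g > p*pi2" using p_lt1 by simp
    then have A: "(1-p)*g*\<delta> > p*pi2*\<delta>" using dpos by (intro mult_strict_right_mono) auto
    have "Em fstar - Em f1 = (\<integral>\<theta>. penalty (d+lam) eps (fstar - Q \<theta>) - penalty (d+lam) eps (f1 - Q \<theta>) \<partial>M)"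
      unfolding Em_def using m_int by simp
    also have "\<dots> \<ge> (\<integral>\<theta>. \<delta> / (d+lam) * (f1 - eps - Q \<theta>) \<partial>M)"
    proof (rule integral_mono)
      show "integrable M (\<lambda>\<theta>. \<delta> / (d+lam) * (f1 - eps - Q \<theta>))" using Q_int by simp
      show "integrable M (\<lambda>\<theta>. penalty (d+lam) eps (fstar - Q \<theta>) - penalty (d+lam) eps (f1 - Q \<theta>))"
        using m_int by simp
      fix \<theta>
      have "penalty (d+lam) eps (fstar - Q \<theta>) - penalty (d+lam) eps (f1 - Q \<theta>)
        \<ge> ((fstar - Q \<theta>) - (f1 - Q \<theta>)) * ((f1 - Q \<theta>) - eps) / (d+lam)"
        using dpos d_pos lam_pos eps_pos unfolding \<delta>_def by (intro pen_subgrad) auto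
      then show "\<delta> / (d+lam) * (f1 - eps - Q \<theta>)
          \<le> penalty (d+lam) eps (fstar - Q \<theta>) - penalty (d+lam) eps (f1 - Q \<theta>)"
        unfolding \<delta>_def by (simp add: algebra_simps)
    qed
    also have "(\<integral>\<theta>. \<delta> / (d+lam) * (f1 - eps - Q \<theta>) \<partial>M) = \<delta> / (d+lam) * (f1 - eps - EQ)"
      unfolding EQ_def using Q_int by (simp add: P.prob_space algebra_simps)
    also have "\<dots> = g * \<delta>" unfolding g_def by (simp add: algebra_simps)
    finally have B: "Em fstar - Em f1 \<ge> g * \<delta>" .
    then have "(1-p)*(Em fstar - Em f1) \<ge> (1-p)*(g*\<delta>)" using p_lt1 by (intro mult_left_mono) auto
    then have "Hcost M p pi0 pi2 u (penalty lam eps) fstar > Hcost M p pi0 pi2 u (penalty lam eps) f1"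
      unfolding HF using A unfolding \<delta>_def by (simp add: algebra_simps)
    then show False using fstar_opt by (meson not_le)
  qed
  have c3: "Hcost M p pi0 pi2 u (penalty lam eps) fstar \<le> EK"
  proof -
    have "Em EQ = 0"
    proof -
      have "penalty (d+lam) eps (EQ - Q \<theta>) = 0" for \<theta>
      proof (rule pen_zero)
        have "max (q_max - EQ) (EQ - q_min) \<le> eps" using spread qa_fun unfolding EQ_def by simp
        then show "\<bar>EQ - Q \<theta>\<bar> \<le> eps" using Qr[of \<theta>] by auto
      qed
      then show ?thesis unfolding Em_def by simp
    qed
    then have "Hcost M p pi0 pi2 u (penalty lam eps) EQ = EK - p*(d*pi2^2/2)" unfolding HF by simp
    also have "\<dots> \<le> EK" using p_pos d_pos by simp
    finally show ?thesis using fstar_opt by (meson order_trans)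
  qed
  show ?thesis
    using c1 c2 c3 K_eq unfolding EK_def EQ_def qa_fun by simp
qed

end
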